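(* Let $X$ be a real random variable with $\mathbb{E}|X|^k<\infty$ for all $k=1,2,\dots$. For $i=0,1,2$ and $(y,a)\in\mathbb R^2$ let $h_i(y;a)=\mathbb{E}[X^i\varphi(y-aX)]$, and let $g_i(y;a)=\frac{\partial^i}{\partial a^i}\Big(\frac{h_1^2}{h_0}\Big)(y;a)$ for $i=0,1,2,\dots$. Then for every $i=0,1,2,\dots$ and all real $v<w$, the function $(y,a)\mapsto g_i(y;a)$ is (Lebesgue) integrable on $\mathbb{R}\times[v,w]$.
   Context: $\varphi(t)=(2\pi)^{-1/2}e^{-t^2/2}$ is the standard Gaussian density; $h_0(y;a)>0$ is the density of $aX+N$ with $N\sim\mathcal N(0,1)$ independent of $X$. *)

theory Defs
  imports "HOL-Probability.Probability"
begin

definition hfun :: "'s measure \<Rightarrow> ('s \<Rightarrow> real) \<Rightarrow> nat \<Rightarrow> real \<Rightarrow> real \<Rightarrow> real" where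
  "hfun M X i y a = (\<integral>\<omega>. X \<omega> ^ i * std_normal_density (y - a * X \<omega>) \<partial>M)"

definition gfun :: "'s measure \<Rightarrow> ('s \<Rightarrow> real) \<Rightarrow> nat \<Rightarrow> real \<Rightarrow> real \<Rightarrow> real" where
  "gfun M X i y a = (deriv ^^ i) (\<lambda>b. (hfun M X 1 y b)\<^sup>2 / hfun M X 0 y b) a"

end

theory Submission
  imports Defs
begin


lemma DERIV_std_normal: "DERIV std_normal_density t :> - t * std_normal_density t"
  unfolding std_normal_density_def
  by (auto intro!: derivative_eq_intros simp: power2_eq_square field_simps)

lemma std_normal_le1: "std_normal_density t \<le> 1"
proof -
  have e: "exp (- t\<^sup>2 / 2) \<le> 1" by simp
  have s: "1 \<le> sqrt (2 * pi)" using pi_gt3 by (simp add: real_le_rsqrt)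
  have "std_normal_density t = exp (- t\<^sup>2 / 2) / sqrt (2 * pi)"
    unfolding std_normal_density_def by simp
  also have "\<dots> \<le> exp (- t\<^sup>2 / 2)" using s by (simp add: divide_le_eq mult_le_cancel_left1 order_trans)
  also have "\<dots> \<le> 1" by (rule e)
  finally show ?thesis .
qed

lemma tangent_pow:
  fixes a x :: real assumes "0 < a" "0 \<le> x"
  shows "a ^ n + real n * a ^ (n - 1) * (x - a) \<le> x ^ n"
proof -
  have "1 + real n * (x / a - 1) \<le> (1 + (x / a - 1)) ^ n"
    by (rule Bernoulli_inequality) (use assms in auto)
  hence "a ^ n * (1 + real n * (x / a - 1)) \<le> a ^ n * (x / a) ^ n"
    using assms by (intro mult_left_mono) auto
  moreover have "a ^ n * (x / a) ^ n = x ^ n" using assms by (simp add: power_divide)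
  moreover have "a ^ n * (1 + real n * (x / a - 1)) = a ^ n + real n * a ^ (n - 1) * (x - a)"
  proof (cases n)
    case 0 then show ?thesis by simp
  next
    case (Suc m) then show ?thesis using assms by (simp add: field_simps)
  qed
  ultimately show ?thesis by simp
qed



lemma DERIV_integral:
  fixes f f' :: "real \<Rightarrow> 'a \<Rightarrow> real" and M :: "'a measure"
  assumes fm: "\<And>t. f t \<in> borel_measurable M"
   and f'm: "f' x \<in> borel_measurable M"
   and fi: "integrable M (f x)"
   and wi: "integrable M w"
   and d: "\<And>t \<omega>. \<omega> \<in> space M \<Longrightarrow> ((\<lambda>t. f t \<omega>) has_real_derivative f' t \<omega>) (at t)"
   and b: "\<And>t \<omega>. \<omega> \<in> space M \<Longrightarrow> \<bar>t - x\<bar> \<le> 1 \<Longrightarrow> \<bar>f' t \<omega>\<bar> \<le> w \<omega>"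
  shows "((\<lambda>t. \<integral>\<omega>. f t \<omega> \<partial>M) has_real_derivative (\<integral>\<omega>. f' x \<omega> \<partial>M)) (at x)"
proof -
  have q: "\<bar>(f t \<omega> - f x \<omega>) / (t - x)\<bar> \<le> w \<omega>"
    if \<omega>: "\<omega> \<in> space M" and t: "t \<noteq> x" "\<bar>t - x\<bar> \<le> 1" for t \<omega>
  proof (cases "x < t")
    case True
    from MVT2[OF True, of "\<lambda>t. f t \<omega>" "\<lambda>t. f' t \<omega>"] d[OF \<omega>]
    obtain z where z: "x < z" "z < t" "f t \<omega> - f x \<omega> = (t - x) * f' z \<omega>" by blast
    have "\<bar>f' z \<omega>\<bar> \<le> w \<omega>" using b[OF \<omega>, of z] z t True by auto
    then show ?thesis using z True by simp
  next
    case False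
    then have lt: "t < x" using t by auto
    from MVT2[OF lt, of "\<lambda>t. f t \<omega>" "\<lambda>t. f' t \<omega>"] d[OF \<omega>]
    obtain z where z: "t < z" "z < x" "f x \<omega> - f t \<omega> = (x - t) * f' z \<omega>" by blast
    have "\<bar>f' z \<omega>\<bar> \<le> w \<omega>" using b[OF \<omega>, of z] z t lt by auto
    moreover have "(f t \<omega> - f x \<omega>) / (t - x) = f' z \<omega>" using z lt
      by (simp add: field_simps)
    ultimately show ?thesis by simp
  qed
  have diffb: "\<bar>f t \<omega> - f x \<omega>\<bar> \<le> w \<omega>"
    if \<omega>: "\<omega> \<in> space M" and t: "\<bar>t - x\<bar> \<le> 1" for t \<omega>
  proof (cases "t = x")
    case True
    have "0 \<le> \<bar>f' x \<omega>\<bar>" by simp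
    also have "\<dots> \<le> w \<omega>" using b[OF \<omega>, of x] by simp
    finally show ?thesis using True by simp
  next
    case False
    have "\<bar>f t \<omega> - f x \<omega>\<bar> = \<bar>(f t \<omega> - f x \<omega>) / (t - x)\<bar> * \<bar>t - x\<bar>"
      using False by (simp add: abs_divide)
    also have "\<dots> \<le> w \<omega> * 1"
      using q[OF \<omega> False t] t order_trans[OF abs_ge_zero b[OF \<omega>, of x]] by (intro mult_mono) auto
    finally show ?thesis by simp
  qed
  have fti: "integrable M (f t)" if t: "\<bar>t - x\<bar> \<le> 1" for t
  proof -
    have "integrable M (\<lambda>\<omega>. f t \<omega> - f x \<omega>)"
      by (rule Bochner_Integration.integrable_bound[OF wi]) (use diffb t fm in \<open>auto intro!: AE_I2 intro: order_trans[OF _ abs_ge_self]\<close>)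
    then have "integrable M (\<lambda>\<omega>. (f t \<omega> - f x \<omega>) + f x \<omega>)"
      using fi by (rule Bochner_Integration.integrable_add)
    then show ?thesis by simp
  qed
  show ?thesis
    unfolding has_field_derivative_iff tendsto_at_iff_sequentially
  proof (intro allI impI)
    fix S :: "nat \<Rightarrow> real"
    assume S: "\<forall>i. S i \<in> UNIV - {x}" and Sl: "S \<longlonglongrightarrow> x"
    from Sl have "eventually (\<lambda>i. dist (S i) x < 1) sequentially"
      by (rule tendstoD) simp
    then obtain N where N: "\<And>i. i \<ge> N \<Longrightarrow> \<bar>S i - x\<bar> < 1"
      by (auto simp: eventually_sequentially dist_real_def)
    define s where "s i \<omega> = (f (S (i + N)) \<omega> - f x \<omega>) / (S (i + N) - x)" for i \<omega>
    have lim: "(\<lambda>i. \<integral>\<omega>. s i \<omega> \<partial>M) \<longlonglongrightarrow> (\<integral>\<omega>. f' x \<omega> \<partial>M)"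
    proof (rule integral_dominated_convergence[OF f'm _ wi])
      show "\<And>i. s i \<in> borel_measurable M" unfolding s_def using fm by measurable
      show "AE \<omega> in M. (\<lambda>i. s i \<omega>) \<longlonglongrightarrow> f' x \<omega>"
      proof (rule AE_I2)
        fix \<omega> assume \<omega>: "\<omega> \<in> space M"
        have "((\<lambda>t. (f t \<omega> - f x \<omega>) / (t - x)) \<longlongrightarrow> f' x \<omega>) (at x)"
          using d[OF \<omega>, of x] unfolding has_field_derivative_iff .
        then have "((\<lambda>t. (f t \<omega> - f x \<omega>) / (t - x)) \<circ> S) \<longlonglongrightarrow> f' x \<omega>"
          unfolding tendsto_at_iff_sequentially using S Sl by blast
        then have "(\<lambda>i. ((\<lambda>t. (f t \<omega> - f x \<omega>) / (t - x)) \<circ> S) (i + N)) \<longlonglongrightarrow> f' x \<omega>"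
          by (rule LIMSEQ_ignore_initial_segment)
        then show "(\<lambda>i. s i \<omega>) \<longlonglongrightarrow> f' x \<omega>" by (simp add: s_def)
      qed
      show "\<And>i. AE \<omega> in M. norm (s i \<omega>) \<le> w \<omega>"
      proof (rule AE_I2)
        fix i \<omega> assume \<omega>: "\<omega> \<in> space M"
        show "norm (s i \<omega>) \<le> w \<omega>" unfolding s_def real_norm_def
          using q[OF \<omega>, of "S (i + N)"] S N[of "i + N"] by auto
      qed
    qed
    have eq: "(\<integral>\<omega>. s i \<omega> \<partial>M) = ((\<lambda>t. ((\<integral>\<omega>. f t \<omega> \<partial>M) - (\<integral>\<omega>. f x \<omega> \<partial>M)) / (t - x)) \<circ> S) (i + N)" for i
    proof -
      have "integrable M (f (S (i + N)))" using fti N[of "i + N"] by auto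
      then show ?thesis unfolding s_def using fi
        by (simp add: Bochner_Integration.integral_diff)
    qed
    show "((\<lambda>t. ((\<integral>\<omega>. f t \<omega> \<partial>M) - (\<integral>\<omega>. f x \<omega> \<partial>M)) / (t - x)) \<circ> S) \<longlonglongrightarrow> (\<integral>\<omega>. f' x \<omega> \<partial>M)"
      by (rule LIMSEQ_offset[where k=N]) (use lim eq in simp)
  qed
qed



lemma mon_le:
  fixes x u B :: real
  assumes "\<bar>x\<bar> \<le> B" "\<bar>u\<bar> \<le> B" "1 \<le> B" "a + c \<le> E"
  shows "\<bar>x\<bar> ^ a * \<bar>u\<bar> ^ c \<le> B ^ E"
proof -
  have "\<bar>x\<bar> ^ a * \<bar>u\<bar> ^ c \<le> B ^ a * B ^ c"
    using assms by (intro mult_mono power_mono) auto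
  also have "\<dots> = B ^ (a + c)" by (simp add: power_add)
  also have "\<dots> \<le> B ^ E" using assms by (intro power_increasing) auto
  finally show ?thesis .
qed

locale mm = prob_space M for M :: "'s measure" +
  fixes X :: "'s \<Rightarrow> real"
  assumes Xm[measurable]: "X \<in> borel_measurable M"
  and mom: "\<And>k::nat. k \<ge> 1 \<Longrightarrow> integrable M (\<lambda>\<omega>. \<bar>X \<omega>\<bar> ^ k)"
begin

definition p :: "nat \<Rightarrow> nat \<Rightarrow> real \<Rightarrow> real \<Rightarrow> real" where
  "p j k y b = (\<integral>\<omega>. X \<omega> ^ j * (y - b * X \<omega>) ^ k * std_normal_density (y - b * X \<omega>) \<partial>M)"

lemma int_pow: "integrable M (\<lambda>\<omega>. (1 + \<bar>X \<omega>\<bar>) ^ k)"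
proof (rule Bochner_Integration.integrable_bound)
  show "integrable M (\<lambda>\<omega>. 2 ^ k * (1 + \<bar>X \<omega>\<bar> ^ k))"
  proof (cases "k = 0")
    case True then show ?thesis by simp
  next
    case False
    then show ?thesis using mom[of k] by (intro integrable_mult_right Bochner_Integration.integrable_add) auto
  qed
  show "(\<lambda>\<omega>. (1 + \<bar>X \<omega>\<bar>) ^ k) \<in> borel_measurable M" by measurable
  show "AE \<omega> in M. norm ((1 + \<bar>X \<omega>\<bar>) ^ k) \<le> norm (2 ^ k * (1 + \<bar>X \<omega>\<bar> ^ k))"
  proof (rule AE_I2)
    fix \<omega>
    have "(1 + \<bar>X \<omega>\<bar>) ^ k \<le> 2 ^ k * (1 + \<bar>X \<omega>\<bar> ^ k)"
    proof (cases "\<bar>X \<omega>\<bar> \<le> 1")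
      case True
      have "(1 + \<bar>X \<omega>\<bar>) ^ k \<le> 2 ^ k" using True by (intro power_mono) auto
      also have "\<dots> \<le> 2 ^ k * (1 + \<bar>X \<omega>\<bar> ^ k)" by simp
      finally show ?thesis .
    next
      case False
      have "(1 + \<bar>X \<omega>\<bar>) ^ k \<le> (2 * \<bar>X \<omega>\<bar>) ^ k" using False by (intro power_mono) auto
      also have "\<dots> \<le> 2 ^ k * (1 + \<bar>X \<omega>\<bar> ^ k)" by (simp add: power_mult_distrib)
      finally show ?thesis .
    qed
    then show "norm ((1 + \<bar>X \<omega>\<bar>) ^ k) \<le> norm (2 ^ k * (1 + \<bar>X \<omega>\<bar> ^ k))" by simp
  qed
qed

lemma int_Bpow: "integrable M (\<lambda>\<omega>. (C * (1 + \<bar>X \<omega>\<bar>)) ^ k)"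
  unfolding power_mult_distrib by (intro integrable_mult_right int_pow)

lemma u_bound:
  fixes t b y x :: real
  assumes "\<bar>t - b\<bar> \<le> 1"
  shows "\<bar>y - t * x\<bar> \<le> (2 + \<bar>y\<bar> + \<bar>b\<bar>) * (1 + \<bar>x\<bar>)"
proof -
  have "\<bar>t\<bar> \<le> 1 + \<bar>b\<bar>" using assms by arith
  have "\<bar>y - t * x\<bar> \<le> \<bar>y\<bar> + \<bar>t\<bar> * \<bar>x\<bar>" by (simp add: abs_mult abs_triangle_ineq4 order_trans[OF abs_triangle_ineq4])
  also have "\<dots> \<le> \<bar>y\<bar> + (1 + \<bar>b\<bar>) * \<bar>x\<bar>" using \<open>\<bar>t\<bar> \<le> 1 + \<bar>b\<bar>\<close> by (intro add_left_mono mult_right_mono) auto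
  also have "\<dots> \<le> (2 + \<bar>y\<bar> + \<bar>b\<bar>) * (1 + \<bar>x\<bar>)" by (simp add: algebra_simps mult_nonneg_nonneg)
  finally show ?thesis .
qed

lemma x_bound: "\<bar>x\<bar> \<le> (2 + \<bar>y\<bar> + \<bar>b\<bar>) * (1 + \<bar>x::real\<bar>)"
  by (simp add: algebra_simps)

lemma B_ge1: "1 \<le> (2 + \<bar>y\<bar> + \<bar>b\<bar>) * (1 + \<bar>x::real\<bar>)"
  by (simp add: algebra_simps)

lemma integrand_bound:
  fixes t b y x :: real
  assumes "\<bar>t - b\<bar> \<le> 1" "j + k \<le> E"
  shows "\<bar>x ^ j * (y - t * x) ^ k * std_normal_density (y - t * x)\<bar> \<le> ((2 + \<bar>y\<bar> + \<bar>b\<bar>) * (1 + \<bar>x\<bar>)) ^ E"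
proof -
  have "\<bar>x ^ j * (y - t * x) ^ k * std_normal_density (y - t * x)\<bar>
     = \<bar>x\<bar> ^ j * \<bar>y - t * x\<bar> ^ k * std_normal_density (y - t * x)"
    by (simp add: abs_mult power_abs)
  also have "\<dots> \<le> \<bar>x\<bar> ^ j * \<bar>y - t * x\<bar> ^ k * 1"
    by (intro mult_left_mono std_normal_le1) auto
  also have "\<dots> \<le> ((2 + \<bar>y\<bar> + \<bar>b\<bar>) * (1 + \<bar>x\<bar>)) ^ E"
    using mon_le[OF x_bound u_bound[OF assms(1)] B_ge1 assms(2)] by simp
  finally show ?thesis .
qed

lemma integrable_p: "integrable M (\<lambda>\<omega>. X \<omega> ^ j * (y - b * X \<omega>) ^ k * std_normal_density (y - b * X \<omega>))"
  by (rule Bochner_Integration.integrable_bound[OF int_Bpow[of "2 + \<bar>y\<bar> + \<bar>b\<bar>" "j + k"]])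
     (use integrand_bound[of b b j k "j + k"] in \<open>auto intro!: AE_I2\<close>)

end


lemma DERIV_std_normal_chain[derivative_intros]:
  "(f has_real_derivative f') (at x within s) \<Longrightarrow>
   ((\<lambda>x. std_normal_density (f x)) has_real_derivative (- f x * std_normal_density (f x) * f')) (at x within s)"
  using DERIV_chain2[OF DERIV_std_normal] by (simp add: mult.assoc)

context mm begin

lemma DERIV_p: "DERIV (\<lambda>b. p j k y b) b :> (- real k * p (Suc j) (k - 1) y b + p (Suc j) (Suc k) y b)"
proof -
  define f where "f t \<omega> = X \<omega> ^ j * (y - t * X \<omega>) ^ k * std_normal_density (y - t * X \<omega>)" for t \<omega>
  define f' where "f' t \<omega> = - real k * (X \<omega> ^ Suc j * (y - t * X \<omega>) ^ (k - 1) * std_normal_density (y - t * X \<omega>))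
     + X \<omega> ^ Suc j * (y - t * X \<omega>) ^ Suc k * std_normal_density (y - t * X \<omega>)" for t \<omega>
  define w where "w \<omega> = real (k + 1) * ((2 + \<bar>y\<bar> + \<bar>b\<bar>) * (1 + \<bar>X \<omega>\<bar>)) ^ (j + k + 2)" for \<omega>
  have "((\<lambda>t. \<integral>\<omega>. f t \<omega> \<partial>M) has_real_derivative (\<integral>\<omega>. f' b \<omega> \<partial>M)) (at b)"
  proof (rule DERIV_integral[where w=w])
    show "\<And>t. f t \<in> borel_measurable M" unfolding f_def by measurable
    show "f' b \<in> borel_measurable M" unfolding f'_def by measurable
    show "integrable M (f b)" unfolding f_def by (rule integrable_p)
    show "integrable M w" unfolding w_def by (intro integrable_mult_right int_Bpow)
    show "((\<lambda>t. f t \<omega>) has_real_derivative f' t \<omega>) (at t)" for t \<omega>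
    proof -
      have "((\<lambda>t. f t \<omega>) has_real_derivative
          X \<omega> ^ j * (real k * (y - t * X \<omega>) ^ (k - 1) * (- X \<omega>)) * std_normal_density (y - t * X \<omega>)
          + X \<omega> ^ j * (y - t * X \<omega>) ^ k * (- (y - t * X \<omega>) * std_normal_density (y - t * X \<omega>) * (- X \<omega>))) (at t)"
        unfolding f_def
        by (auto intro!: derivative_eq_intros)
      moreover have "X \<omega> ^ j * (real k * (y - t * X \<omega>) ^ (k - 1) * (- X \<omega>)) * std_normal_density (y - t * X \<omega>)
          + X \<omega> ^ j * (y - t * X \<omega>) ^ k * (- (y - t * X \<omega>) * std_normal_density (y - t * X \<omega>) * (- X \<omega>)) = f' t \<omega>"
        unfolding f'_def by (simp add: algebra_simps)
      ultimately show ?thesis by simp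
    qed
    show "\<bar>f' t \<omega>\<bar> \<le> w \<omega>" if "\<bar>t - b\<bar> \<le> 1" for t \<omega>
    proof -
      let ?B = "((2 + \<bar>y\<bar> + \<bar>b\<bar>) * (1 + \<bar>X \<omega>\<bar>)) ^ (j + k + 2)"
      have 1: "\<bar>X \<omega> ^ Suc j * (y - t * X \<omega>) ^ (k - 1) * std_normal_density (y - t * X \<omega>)\<bar> \<le> ?B"
        by (rule integrand_bound[OF that]) simp
      have 2: "\<bar>X \<omega> ^ Suc j * (y - t * X \<omega>) ^ Suc k * std_normal_density (y - t * X \<omega>)\<bar> \<le> ?B"
        by (rule integrand_bound[OF that]) simp
      have "\<bar>f' t \<omega>\<bar> \<le> real k * \<bar>X \<omega> ^ Suc j * (y - t * X \<omega>) ^ (k - 1) * std_normal_density (y - t * X \<omega>)\<bar>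
          + \<bar>X \<omega> ^ Suc j * (y - t * X \<omega>) ^ Suc k * std_normal_density (y - t * X \<omega>)\<bar>"
        unfolding f'_def by (metis (no_types, lifting) abs_minus_cancel abs_mult abs_of_nat abs_triangle_ineq mult_minus_left)
      also have "\<dots> \<le> real k * ?B + ?B" using 1 2 by (intro add_mono mult_left_mono) auto
      also have "\<dots> = w \<omega>" unfolding w_def by (simp add: algebra_simps)
      finally show ?thesis .
    qed
  qed
  moreover have "(\<lambda>t. \<integral>\<omega>. f t \<omega> \<partial>M) = (\<lambda>t. p j k y t)"
    unfolding f_def p_def by simp
  moreover have "(\<integral>\<omega>. f' b \<omega> \<partial>M) = - real k * p (Suc j) (k - 1) y b + p (Suc j) (Suc k) y b"
  proof -
    have i1: "integrable M (\<lambda>\<omega>. - real k * (X \<omega> ^ Suc j * (y - b * X \<omega>) ^ (k - 1) * std_normal_density (y - b * X \<omega>)))"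
      by (intro integrable_mult_right integrable_p)
    have i2: "integrable M (\<lambda>\<omega>. X \<omega> ^ Suc j * (y - b * X \<omega>) ^ Suc k * std_normal_density (y - b * X \<omega>))"
      by (rule integrable_p)
    show ?thesis unfolding f'_def p_def
      by (simp only: Bochner_Integration.integral_add[OF i1 i2] integral_mult_right_zero)
  qed
  ultimately show ?thesis by simp
qed

end


context mm begin

definition prodP :: "(nat \<times> nat) list \<Rightarrow> real \<Rightarrow> real \<Rightarrow> real" where
  "prodP js y b = prod_list (map (\<lambda>(j, k). p j k y b) js)"

lemma prodP_Nil[simp]: "prodP [] y b = 1" by (simp add: prodP_def)
lemma prodP_Cons[simp]: "prodP ((j, k) # js) y b = p j k y b * prodP js y b" by (simp add: prodP_def)
lemma prodP_append: "prodP (js @ ks) y b = prodP js y b * prodP ks y b" by (simp add: prodP_def)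

lemma p00_pos: "0 < p 0 0 y b"
proof -
  have i: "integrable M (\<lambda>\<omega>. std_normal_density (y - b * X \<omega>))"
    using integrable_p[of 0 y b 0] by simp
  have nn: "0 \<le> p 0 0 y b" unfolding p_def by (simp add: integral_nonneg_AE)
  have "p 0 0 y b \<noteq> 0"
  proof
    assume "p 0 0 y b = 0"
    then have "AE \<omega> in M. std_normal_density (y - b * X \<omega>) = 0"
      using integral_nonneg_eq_0_iff_AE[OF i] unfolding p_def by simp
    then have "AE \<omega> in M. False"
      by eventually_elim (metis less_irrefl normal_density_pos zero_less_one)
    then show False using AE_False by simp
  qed
  then show ?thesis using nn by simp
qed

inductive polyN :: "nat \<Rightarrow> (real \<Rightarrow> real \<Rightarrow> real) \<Rightarrow> bool" where
  pterm: "length js = n \<Longrightarrow> polyN n (\<lambda>y b. c * prodP js y b)"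
| padd: "polyN n f \<Longrightarrow> polyN n g \<Longrightarrow> polyN n (\<lambda>y b. f y b + g y b)"

lemma polyN_mult_p: "polyN n F \<Longrightarrow> polyN (Suc n) (\<lambda>y b. p j k y b * F y b)"
proof (induction rule: polyN.induct)
  case (pterm js n c)
  have "polyN (Suc n) (\<lambda>y b. c * prodP ((j, k) # js) y b)"
    by (rule polyN.pterm) (use pterm in simp)
  then show ?case by (simp add: algebra_simps)
next
  case (padd n f g)
  then show ?case using polyN.padd[OF padd.IH] by (simp add: distrib_left)
qed

lemma polyN_scale: "polyN n F \<Longrightarrow> polyN n (\<lambda>y b. c * F y b)"
proof (induction rule: polyN.induct)
  case (pterm js n c')
  then show ?case using polyN.pterm[of js n "c * c'"] by (simp add: mult.assoc)
next
  case (padd n f g)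
  then show ?case using polyN.padd[OF padd.IH] by (simp add: distrib_left)
qed

lemma DERIV_prodP: "\<exists>F. polyN (length js) F \<and> (\<forall>y b. DERIV (prodP js y) b :> F y b)"
proof (induction js)
  case Nil
  have "polyN 0 (\<lambda>y b. 0 * prodP [] y b)" by (rule polyN.pterm) simp
  then show ?case by (intro exI[of _ "\<lambda>y b. 0 * prodP [] y b"]) auto
next
  case (Cons jk rest)
  obtain j k where jk: "jk = (j, k)" by (cases jk)
  from Cons obtain F where F: "polyN (length rest) F" "\<And>y b. DERIV (prodP rest y) b :> F y b" by blast
  define G where "G y b = (- real k) * prodP ((Suc j, k - 1) # rest) y b
      + (1 * prodP ((Suc j, Suc k) # rest) y b + p j k y b * F y b)" for y b
  have "polyN (Suc (length rest)) G"
    unfolding G_def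
    by (intro polyN.padd polyN.pterm polyN_mult_p F) auto
  moreover have "DERIV (prodP (jk # rest) y) b :> G y b" for y b
  proof -
    have "DERIV (\<lambda>b. p j k y b * prodP rest y b) b :>
        (- real k * p (Suc j) (k - 1) y b + p (Suc j) (Suc k) y b) * prodP rest y b + p j k y b * F y b"
      using DERIV_mult[OF DERIV_p F(2)] by (simp add: algebra_simps)
    moreover have "prodP ((j, k) # rest) y = (\<lambda>b. p j k y b * prodP rest y b)" by (rule ext) simp
    ultimately show ?thesis unfolding G_def jk by (simp add: algebra_simps)
  qed
  ultimately show ?case unfolding jk length_Cons by blast
qed

inductive adm :: "(real \<Rightarrow> real \<Rightarrow> real) \<Rightarrow> bool" where
  aterm: "length js = Suc m \<Longrightarrow> adm (\<lambda>y b. c * prodP js y b / p 0 0 y b ^ m)"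
| aadd: "adm f \<Longrightarrow> adm g \<Longrightarrow> adm (\<lambda>y b. f y b + g y b)"

lemma polyN_div: "polyN n F \<Longrightarrow> n = Suc m \<Longrightarrow> adm (\<lambda>y b. F y b / p 0 0 y b ^ m)"
proof (induction rule: polyN.induct)
  case (pterm js n c)
  then show ?case by (intro adm.aterm) simp
next
  case (padd n f g)
  then show ?case using adm.aadd[OF padd.IH] by (simp add: add_divide_distrib)
qed

lemma DERIV_adm: "adm f \<Longrightarrow> \<exists>f'. adm f' \<and> (\<forall>y b. DERIV (f y) b :> f' y b)"
proof (induction rule: adm.induct)
  case (aterm js m c)
  obtain F where F: "polyN (length js) F" "\<And>y b. DERIV (prodP js y) b :> F y b"
    using DERIV_prodP by blast
  define G where "G y b = (c * F y b) / p 0 0 y b ^ m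
     + (- (c * real m)) * prodP (js @ [(Suc 0, Suc 0)]) y b / p 0 0 y b ^ Suc m" for y b
  have "adm G"
    unfolding G_def
  proof (rule adm.aadd)
    show "adm (\<lambda>y b. c * F y b / p 0 0 y b ^ m)"
      by (rule polyN_div[OF polyN_scale[OF F(1)]]) (use aterm in simp)
    show "adm (\<lambda>y b. - (c * real m) * prodP (js @ [(Suc 0, Suc 0)]) y b / p 0 0 y b ^ Suc m)"
      by (rule adm.aterm) (use aterm in simp)
  qed
  moreover have "DERIV (\<lambda>b. c * prodP js y b / p 0 0 y b ^ m) b :> G y b" for y b
  proof -
    have d0: "DERIV (\<lambda>b. p 0 0 y b) b :> p (Suc 0) (Suc 0) y b"
      using DERIV_p[of 0 0 y b] by simp
    have "DERIV (\<lambda>b. c * prodP js y b / p 0 0 y b ^ m) b :>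
       ((c * F y b) * p 0 0 y b ^ m - c * prodP js y b * (real m * p 0 0 y b ^ (m - 1) * p (Suc 0) (Suc 0) y b))
         / (p 0 0 y b ^ m * p 0 0 y b ^ m)"
    proof -
      have dp: "DERIV (\<lambda>b. p 0 0 y b ^ m) b :> real m * p 0 0 y b ^ (m - 1) * p (Suc 0) (Suc 0) y b"
        using DERIV_power[OF d0, of m] by (simp add: algebra_simps)
      have "p 0 0 y b ^ m \<noteq> 0" using p00_pos[of y b] by simp
      from DERIV_divide[OF DERIV_cmult[OF F(2)] dp this, of c] show ?thesis by simp
    qed
    moreover have "((c * F y b) * p 0 0 y b ^ m - c * prodP js y b * (real m * p 0 0 y b ^ (m - 1) * p (Suc 0) (Suc 0) y b))
         / (p 0 0 y b ^ m * p 0 0 y b ^ m) = G y b"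
    proof (cases m)
      case 0
      then show ?thesis unfolding G_def by simp
    next
      case (Suc m')
      have pos: "0 < p 0 0 y b" by (rule p00_pos)
      show ?thesis unfolding G_def prodP_append Suc using pos
        by (simp add: field_simps power_Suc)
    qed
    ultimately show ?thesis by simp
  qed
  ultimately show ?case by blast
next
  case (aadd f g)
  then obtain f' g' where "adm f'" "\<And>y b. DERIV (f y) b :> f' y b" "adm g'" "\<And>y b. DERIV (g y) b :> g' y b"
    by blast
  then show ?case
    by (intro exI[of _ "\<lambda>y b. f' y b + g' y b"]) (auto intro: adm.aadd DERIV_add)
qed

lemma gfun_adm: "\<exists>f. adm f \<and> (\<forall>y. (deriv ^^ i) (\<lambda>b. (hfun M X 1 y b)\<^sup>2 / hfun M X 0 y b) = f y)"
proof (induction i)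
  case 0
  have "adm (\<lambda>y b. 1 * prodP [(1, 0), (1, 0)] y b / p 0 0 y b ^ 1)"
    by (rule adm.aterm) simp
  moreover have "(\<lambda>b. (hfun M X 1 y b)\<^sup>2 / hfun M X 0 y b) = (\<lambda>b. 1 * prodP [(1, 0), (1, 0)] y b / p 0 0 y b ^ 1)" for y
    by (simp add: hfun_def p_def power2_eq_square)
  ultimately show ?case by (intro exI[of _ "\<lambda>y b. 1 * prodP [(1, 0), (1, 0)] y b / p 0 0 y b ^ 1"]) auto
next
  case (Suc i)
  then obtain f where f: "adm f" "\<And>y. (deriv ^^ i) (\<lambda>b. (hfun M X 1 y b)\<^sup>2 / hfun M X 0 y b) = f y" by blast
  obtain f' where f': "adm f'" "\<And>y b. DERIV (f y) b :> f' y b" using DERIV_adm[OF f(1)] by blast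
  have "(deriv ^^ Suc i) (\<lambda>b. (hfun M X 1 y b)\<^sup>2 / hfun M X 0 y b) = f' y" for y
    using f(2)[of y] f'(2)[of y] by (auto intro!: ext DERIV_imp_deriv)
  then show ?case using f'(1) by blast
qed

end


context mm begin

definition K :: "nat \<Rightarrow> real \<Rightarrow> real \<Rightarrow> 's \<Rightarrow> real" where
  "K N y b \<omega> = (1 + \<bar>X \<omega>\<bar>) ^ N * (1 + \<bar>y - b * X \<omega>\<bar>) ^ N * std_normal_density (y - b * X \<omega>)"

definition H :: "nat \<Rightarrow> real \<Rightarrow> real \<Rightarrow> real" where
  "H N y b = (\<integral>\<omega>. K N y b \<omega> \<partial>M)"

lemma K_nonneg: "0 \<le> K N y b \<omega>" unfolding K_def by simp

lemma K_meas[measurable]: "K N y b \<in> borel_measurable M" unfolding K_def by measurable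

lemma intK: "integrable M (K N y b)"
proof (rule Bochner_Integration.integrable_bound[OF int_Bpow[of "3 + \<bar>y\<bar> + \<bar>b\<bar>" "2 * N"]])
  show "K N y b \<in> borel_measurable M" by measurable
  show "AE \<omega> in M. norm (K N y b \<omega>) \<le> norm (((3 + \<bar>y\<bar> + \<bar>b\<bar>) * (1 + \<bar>X \<omega>\<bar>)) ^ (2 * N))"
  proof (rule AE_I2)
    fix \<omega>
    let ?B = "(3 + \<bar>y\<bar> + \<bar>b\<bar>) * (1 + \<bar>X \<omega>\<bar>)"
    have u: "\<bar>y - b * X \<omega>\<bar> \<le> (2 + \<bar>y\<bar> + \<bar>b\<bar>) * (1 + \<bar>X \<omega>\<bar>)"
      using u_bound[of b b y "X \<omega>"] by simp
    have B1: "1 \<le> ?B" by (simp add: algebra_simps)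
    have "\<bar>1 + \<bar>y - b * X \<omega>\<bar>\<bar> \<le> ?B" using u by (simp add: algebra_simps, smt (verit) abs_ge_zero)
    moreover have "\<bar>1 + \<bar>X \<omega>\<bar>\<bar> \<le> ?B" by (simp add: algebra_simps)
    ultimately have "\<bar>1 + \<bar>X \<omega>\<bar>\<bar> ^ N * \<bar>1 + \<bar>y - b * X \<omega>\<bar>\<bar> ^ N \<le> ?B ^ (2 * N)"
      using B1 by (intro mon_le) auto
    then have m: "(1 + \<bar>X \<omega>\<bar>) ^ N * (1 + \<bar>y - b * X \<omega>\<bar>) ^ N \<le> ?B ^ (2 * N)" by simp
    have "K N y b \<omega> \<le> (1 + \<bar>X \<omega>\<bar>) ^ N * (1 + \<bar>y - b * X \<omega>\<bar>) ^ N * 1"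
      unfolding K_def by (intro mult_left_mono std_normal_le1) auto
    also have "\<dots> \<le> ?B ^ (2 * N)" using m by simp
    finally show "norm (K N y b \<omega>) \<le> norm (?B ^ (2 * N))"
      using K_nonneg[of N y b \<omega>] B1 by simp
  qed
qed

lemma H_nonneg: "0 \<le> H N y b" unfolding H_def by (simp add: K_nonneg)

lemma abs_p_le:
  assumes "j \<le> D" "k \<le> D"
  shows "\<bar>p j k y b\<bar> \<le> H D y b"
proof -
  have "\<bar>p j k y b\<bar> \<le> (\<integral>\<omega>. \<bar>X \<omega> ^ j * (y - b * X \<omega>) ^ k * std_normal_density (y - b * X \<omega>)\<bar> \<partial>M)"
    unfolding p_def by (rule integral_abs_bound)
  also have "\<dots> \<le> H D y b" unfolding H_def
  proof (rule integral_mono[OF _ intK])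
    show "integrable M (\<lambda>\<omega>. \<bar>X \<omega> ^ j * (y - b * X \<omega>) ^ k * std_normal_density (y - b * X \<omega>)\<bar>)"
      by (intro integrable_abs integrable_p)
    fix \<omega>
    have a: "\<bar>X \<omega>\<bar> ^ j \<le> (1 + \<bar>X \<omega>\<bar>) ^ D"
      using assms by (intro order_trans[OF power_mono power_increasing]) auto
    have c: "\<bar>y - b * X \<omega>\<bar> ^ k \<le> (1 + \<bar>y - b * X \<omega>\<bar>) ^ D"
      using assms by (intro order_trans[OF power_mono power_increasing]) auto
    have "\<bar>X \<omega> ^ j * (y - b * X \<omega>) ^ k * std_normal_density (y - b * X \<omega>)\<bar>
        = \<bar>X \<omega>\<bar> ^ j * \<bar>y - b * X \<omega>\<bar> ^ k * std_normal_density (y - b * X \<omega>)"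
      by (simp add: abs_mult power_abs)
    also have "\<dots> \<le> K D y b \<omega>" unfolding K_def
      using a c by (intro mult_right_mono mult_mono) auto
    finally show "\<bar>X \<omega> ^ j * (y - b * X \<omega>) ^ k * std_normal_density (y - b * X \<omega>)\<bar> \<le> K D y b \<omega>" .
  qed
  finally show ?thesis .
qed

lemma abs_prodP_le:
  assumes "\<forall>(j, k) \<in> set js. j \<le> D \<and> k \<le> D"
  shows "\<bar>prodP js y b\<bar> \<le> H D y b ^ length js"
  using assms
proof (induction js)
  case Nil then show ?case by simp
next
  case (Cons jk rest)
  obtain j k where jk: "jk = (j, k)" by (cases jk)
  have "\<bar>prodP (jk # rest) y b\<bar> = \<bar>p j k y b\<bar> * \<bar>prodP rest y b\<bar>" by (simp add: jk abs_mult)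
  also have "\<dots> \<le> H D y b * H D y b ^ length rest"
    using Cons abs_p_le[of j D k y b] jk H_nonneg by (intro mult_mono) auto
  finally show ?case by simp
qed

lemma jensen_H: "H D y b ^ Suc m \<le> p 0 0 y b ^ m * H (D * Suc m) y b"
proof -
  define n where "n = Suc m"
  define P where "P = p 0 0 y b"
  define A where "A = H D y b"
  define G where "G \<omega> = (1 + \<bar>X \<omega>\<bar>) ^ D * (1 + \<bar>y - b * X \<omega>\<bar>) ^ D" for \<omega>
  define \<phi> where "\<phi> \<omega> = std_normal_density (y - b * X \<omega>)" for \<omega>
  have P: "0 < P" unfolding P_def by (rule p00_pos)
  have Pdef: "P = (\<integral>\<omega>. \<phi> \<omega> \<partial>M)" unfolding P_def p_def \<phi>_def by simp
  have Adef: "A = (\<integral>\<omega>. G \<omega> * \<phi> \<omega> \<partial>M)" unfolding A_def H_def K_def G_def \<phi>_def by simp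
  have G1: "1 \<le> G \<omega>" for \<omega>
  proof -
    have h1: "1 \<le> (1 + \<bar>X \<omega>\<bar>) ^ D" by (intro one_le_power) auto
    have h2: "1 \<le> (1 + \<bar>y - b * X \<omega>\<bar>) ^ D" by (intro one_le_power) auto
    show ?thesis unfolding G_def using mult_mono[OF h1 h2] by simp
  qed
  have i\<phi>: "integrable M \<phi>" using integrable_p[of 0 y b 0] unfolding \<phi>_def by simp
  have iG: "integrable M (\<lambda>\<omega>. G \<omega> * \<phi> \<omega>)" using intK[of D y b] unfolding K_def G_def \<phi>_def by simp
  have iGn: "integrable M (\<lambda>\<omega>. G \<omega> ^ n * \<phi> \<omega>)"
    using intK[of "D * n" y b] unfolding K_def G_def \<phi>_def by (simp add: power_mult power_mult_distrib mult.commute)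
  have Hn: "H (D * n) y b = (\<integral>\<omega>. G \<omega> ^ n * \<phi> \<omega> \<partial>M)"
    unfolding H_def K_def G_def \<phi>_def by (simp add: power_mult power_mult_distrib mult.commute)
  have "P \<le> A" unfolding Pdef Adef
  proof (intro integral_mono i\<phi> iG)
    fix \<omega>
    have "1 * \<phi> \<omega> \<le> G \<omega> * \<phi> \<omega>" using G1[of \<omega>] by (intro mult_right_mono) (auto simp: \<phi>_def)
    then show "\<phi> \<omega> \<le> G \<omega> * \<phi> \<omega>" by simp
  qed
  define a where "a = A / P"
  have a: "0 < a" using P \<open>P \<le> A\<close> unfolding a_def by simp
  have AaP: "A = a * P" using P unfolding a_def by simp
  have "(\<integral>\<omega>. (a ^ n - real n * a ^ (n - 1) * a) * \<phi> \<omega> + (real n * a ^ (n - 1)) * (G \<omega> * \<phi> \<omega>) \<partial>M)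
      = (a ^ n - real n * a ^ (n - 1) * a) * P + (real n * a ^ (n - 1)) * A"
    unfolding Pdef Adef using i\<phi> iG by simp
  also have "\<dots> = a ^ n * P" unfolding AaP by (simp add: algebra_simps)
  finally have eq: "(\<integral>\<omega>. (a ^ n - real n * a ^ (n - 1) * a) * \<phi> \<omega> + (real n * a ^ (n - 1)) * (G \<omega> * \<phi> \<omega>) \<partial>M) = a ^ n * P" .
  have "a ^ n * P \<le> (\<integral>\<omega>. G \<omega> ^ n * \<phi> \<omega> \<partial>M)"
    unfolding eq[symmetric]
  proof (rule integral_mono)
    show "integrable M (\<lambda>\<omega>. (a ^ n - real n * a ^ (n - 1) * a) * \<phi> \<omega> + (real n * a ^ (n - 1)) * (G \<omega> * \<phi> \<omega>))"
      using i\<phi> iG by simp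
    show "integrable M (\<lambda>\<omega>. G \<omega> ^ n * \<phi> \<omega>)" by (rule iGn)
    fix \<omega>
    have t: "a ^ n + real n * a ^ (n - 1) * (G \<omega> - a) \<le> G \<omega> ^ n"
      using a G1[of \<omega>] by (intro tangent_pow) auto
    have "(a ^ n - real n * a ^ (n - 1) * a) * \<phi> \<omega> + (real n * a ^ (n - 1)) * (G \<omega> * \<phi> \<omega>)
        = (a ^ n + real n * a ^ (n - 1) * (G \<omega> - a)) * \<phi> \<omega>" by (simp add: algebra_simps)
    also have "\<dots> \<le> G \<omega> ^ n * \<phi> \<omega>" using t by (intro mult_right_mono) (auto simp: \<phi>_def)
    finally show "(a ^ n - real n * a ^ (n - 1) * a) * \<phi> \<omega> + (real n * a ^ (n - 1)) * (G \<omega> * \<phi> \<omega>) \<le> G \<omega> ^ n * \<phi> \<omega>" .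
  qed
  then have "a ^ n * P \<le> H (D * n) y b" using Hn by simp
  then have "a ^ n * P * P ^ m \<le> H (D * n) y b * P ^ m" using P by (intro mult_right_mono) auto
  moreover have "a ^ n * P * P ^ m = A ^ n" unfolding a_def n_def using P
    by (simp add: power_divide field_simps)
  ultimately show ?thesis unfolding n_def A_def P_def by (simp add: mult.commute)
qed

lemma term_bound:
  assumes "length js = Suc m" "D = sum_list (map (\<lambda>(j, k). j + k) js)"
  shows "\<bar>c * prodP js y b / p 0 0 y b ^ m\<bar> \<le> \<bar>c\<bar> * H (D * Suc m) y b"
proof -
  have "\<forall>(j, k) \<in> set js. j \<le> D \<and> k \<le> D"
  proof (intro ballI, clarify)
    fix j k assume "(j, k) \<in> set js"
    then have "j + k \<le> D" unfolding assms(2)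
      using member_le_sum_list[of "j + k" "map (\<lambda>(j, k). j + k) js"] by force
    then show "j \<le> D \<and> k \<le> D" by simp
  qed
  then have "\<bar>prodP js y b\<bar> \<le> H D y b ^ Suc m" using abs_prodP_le assms(1) by metis
  also have "\<dots> \<le> p 0 0 y b ^ m * H (D * Suc m) y b" by (rule jensen_H)
  finally have pr: "\<bar>prodP js y b\<bar> / p 0 0 y b ^ m \<le> H (D * Suc m) y b"
    using p00_pos[of y b] by (simp add: divide_le_eq mult.commute)
  have "\<bar>c * prodP js y b / p 0 0 y b ^ m\<bar> = \<bar>c\<bar> * (\<bar>prodP js y b\<bar> / p 0 0 y b ^ m)"
    using p00_pos[of y b] by (simp add: abs_mult abs_divide)
  also have "\<dots> \<le> \<bar>c\<bar> * H (D * Suc m) y b" using pr by (intro mult_left_mono) auto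
  finally show ?thesis .
qed

end


lemma pow_le2: "(1 + \<bar>x::real\<bar>) ^ k \<le> 2 ^ k * (1 + \<bar>x\<bar> ^ k)"
proof (cases "\<bar>x\<bar> \<le> 1")
  case True
  have "(1 + \<bar>x\<bar>) ^ k \<le> 2 ^ k" using True by (intro power_mono) auto
  also have "\<dots> \<le> 2 ^ k * (1 + \<bar>x\<bar> ^ k)" by simp
  finally show ?thesis .
next
  case False
  have "(1 + \<bar>x\<bar>) ^ k \<le> (2 * \<bar>x\<bar>) ^ k" using False by (intro power_mono) auto
  also have "\<dots> \<le> 2 ^ k * (1 + \<bar>x\<bar> ^ k)" by (simp add: power_mult_distrib)
  finally show ?thesis .
qed

lemma gauss_fin: "(\<integral>\<^sup>+t. ennreal ((1 + \<bar>t\<bar>) ^ N * std_normal_density t) \<partial>lborel) < \<infinity>"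
proof -
  have "integrable lborel (\<lambda>t. (1 + \<bar>t\<bar>) ^ N * std_normal_density t)"
  proof (rule Bochner_Integration.integrable_bound)
    show "integrable lborel (\<lambda>t. 2 ^ N * (std_normal_density t + std_normal_density t * \<bar>t\<bar> ^ N))"
      by (intro integrable_mult_right Bochner_Integration.integrable_add integrable_std_normal_moment_abs integrable_normal_density) auto
    show "(\<lambda>t. (1 + \<bar>t\<bar>) ^ N * std_normal_density t) \<in> borel_measurable lborel" by measurable
    show "AE t in lborel. norm ((1 + \<bar>t\<bar>) ^ N * std_normal_density t) \<le> norm (2 ^ N * (std_normal_density t + std_normal_density t * \<bar>t\<bar> ^ N))"
    proof (rule AE_I2)
      fix t :: real
      have "(1 + \<bar>t\<bar>) ^ N * std_normal_density t \<le> 2 ^ N * (1 + \<bar>t\<bar> ^ N) * std_normal_density t"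
        by (intro mult_right_mono pow_le2) auto
      also have "\<dots> = 2 ^ N * (std_normal_density t + std_normal_density t * \<bar>t\<bar> ^ N)" by (simp add: algebra_simps)
      finally show "norm ((1 + \<bar>t\<bar>) ^ N * std_normal_density t) \<le> norm (2 ^ N * (std_normal_density t + std_normal_density t * \<bar>t\<bar> ^ N))"
        by simp
    qed
  qed
  from integrableD(2)[OF this] show ?thesis by (simp add: less_top)
qed

context mm begin

lemma p_meas[measurable]: "(\<lambda>z. p j k (fst z) (snd z)) \<in> borel_measurable (lborel \<Otimes>\<^sub>M lborel)"
  unfolding p_def by measurable

lemma prodP_meas[measurable]: "(\<lambda>z. prodP js (fst z) (snd z)) \<in> borel_measurable (lborel \<Otimes>\<^sub>M lborel)"
proof (induction js)
  case Nil then show ?case by simp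
next
  case (Cons jk rest)
  obtain j k where jk: "jk = (j, k)" by (cases jk)
  show ?case unfolding jk prodP_Cons using Cons by measurable
qed

lemma H_meas[measurable]: "(\<lambda>z. H N (fst z) (snd z)) \<in> borel_measurable (lborel \<Otimes>\<^sub>M lborel)"
  unfolding H_def K_def by measurable

end


context mm begin

lemma H_setint:
  assumes vw: "v \<le> w"
  shows "set_integrable (lborel \<Otimes>\<^sub>M lborel) (UNIV \<times> {v..w}) (\<lambda>(y, b). H N y b)"
proof -
  interpret LM: pair_sigma_finite "lborel \<Otimes>\<^sub>M lborel" M
    by (simp add: pair_sigma_finite_def sigma_finite_pair_measure lborel.sigma_finite_measure_axioms sigma_finite_measure_axioms)
  define g where "g t = (1 + \<bar>t\<bar>) ^ N * std_normal_density t" for t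
  define Kg where "Kg = (\<integral>\<^sup>+t. ennreal (g t) \<partial>lborel)"
  have Kg: "Kg < \<infinity>" unfolding Kg_def g_def by (rule gauss_fin)
  have gm[measurable]: "g \<in> borel_measurable borel" unfolding g_def by measurable
  have inner: "(\<integral>\<^sup>+y. ennreal (K N y b \<omega>) \<partial>lborel) = ennreal ((1 + \<bar>X \<omega>\<bar>) ^ N) * Kg" for b \<omega>
  proof -
    have "(\<integral>\<^sup>+y. ennreal (K N y b \<omega>) \<partial>lborel) = (\<integral>\<^sup>+y. ennreal ((1 + \<bar>X \<omega>\<bar>) ^ N) * ennreal (g (y - b * X \<omega>)) \<partial>lborel)"
      by (intro nn_integral_cong) (auto simp: K_def g_def ennreal_mult mult.assoc)
    also have "\<dots> = ennreal ((1 + \<bar>X \<omega>\<bar>) ^ N) * (\<integral>\<^sup>+y. ennreal (g (y - b * X \<omega>)) \<partial>lborel)"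
      by (rule nn_integral_cmult) measurable
    also have "(\<integral>\<^sup>+y. ennreal (g (y - b * X \<omega>)) \<partial>lborel) = Kg"
      using nn_integral_real_affine[of "\<lambda>y. ennreal (g (y - b * X \<omega>))" 1 "b * X \<omega>"] unfolding Kg_def by simp
    finally show ?thesis .
  qed
  have outer: "(\<integral>\<^sup>+z. ennreal (indicator {v..w} (snd z) * K N (fst z) (snd z) \<omega>) \<partial>(lborel \<Otimes>\<^sub>M lborel))
      = ennreal ((1 + \<bar>X \<omega>\<bar>) ^ N) * Kg * ennreal (w - v)" if \<omega>: "\<omega> \<in> space M" for \<omega>
  proof -
    have "(\<integral>\<^sup>+z. ennreal (indicator {v..w} (snd z) * K N (fst z) (snd z) \<omega>) \<partial>(lborel \<Otimes>\<^sub>M lborel))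
        = (\<integral>\<^sup>+b. \<integral>\<^sup>+y. ennreal (indicator {v..w} b * K N y b \<omega>) \<partial>lborel \<partial>lborel)"
      using \<omega> by (subst lborel_pair.nn_integral_snd[symmetric]) (auto simp: K_def)
    also have "\<dots> = (\<integral>\<^sup>+b. (ennreal ((1 + \<bar>X \<omega>\<bar>) ^ N) * Kg) * indicator {v..w} b \<partial>lborel)"
      by (intro nn_integral_cong) (auto split: split_indicator simp: inner)
    also have "\<dots> = (ennreal ((1 + \<bar>X \<omega>\<bar>) ^ N) * Kg) * ennreal (w - v)"
      using vw by (simp add: nn_integral_cmult_indicator)
    finally show ?thesis .
  qed
  have eqf: "(\<lambda>(y, b). H N y b) = (\<lambda>z. H N (fst z) (snd z))" by auto
  have finX: "(\<integral>\<^sup>+\<omega>. ennreal ((1 + \<bar>X \<omega>\<bar>) ^ N) \<partial>M) < \<infinity>"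
    using integrableD(2)[OF int_pow[of N]] by (simp add: less_top)
  show ?thesis unfolding set_integrable_def eqf
  proof (rule integrableI_nonneg)
    show "(\<lambda>z. indicator (UNIV \<times> {v..w}) z *\<^sub>R H N (fst z) (snd z)) \<in> borel_measurable (lborel \<Otimes>\<^sub>M lborel)"
      by measurable
    show "AE z in lborel \<Otimes>\<^sub>M lborel. 0 \<le> indicator (UNIV \<times> {v..w}) z *\<^sub>R H N (fst z) (snd z)"
      by (auto simp: H_nonneg)
    have "(\<integral>\<^sup>+z. ennreal (indicator (UNIV \<times> {v..w}) z *\<^sub>R H N (fst z) (snd z)) \<partial>(lborel \<Otimes>\<^sub>M lborel))
        = (\<integral>\<^sup>+z. \<integral>\<^sup>+\<omega>. ennreal (indicator {v..w} (snd z) * K N (fst z) (snd z) \<omega>) \<partial>M \<partial>(lborel \<Otimes>\<^sub>M lborel))"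
    proof (intro nn_integral_cong)
      fix z :: "real \<times> real"
      have e: "ennreal (H N (fst z) (snd z)) = (\<integral>\<^sup>+\<omega>. ennreal (K N (fst z) (snd z) \<omega>) \<partial>M)"
        unfolding H_def by (rule nn_integral_eq_integral[symmetric]) (auto simp: intK K_nonneg)
      show "ennreal (indicator (UNIV \<times> {v..w}) z *\<^sub>R H N (fst z) (snd z))
          = (\<integral>\<^sup>+\<omega>. ennreal (indicator {v..w} (snd z) * K N (fst z) (snd z) \<omega>) \<partial>M)"
        using e by (cases z) (auto split: split_indicator)
    qed
    also have "\<dots> = (\<integral>\<^sup>+\<omega>. \<integral>\<^sup>+z. ennreal (indicator {v..w} (snd z) * K N (fst z) (snd z) \<omega>) \<partial>(lborel \<Otimes>\<^sub>M lborel) \<partial>M)"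
      by (rule LM.Fubini[where f="\<lambda>x. ennreal (indicator {v..w} (snd (fst x)) * K N (fst (fst x)) (snd (fst x)) (snd x))", symmetric, simplified])
         (simp add: K_def)
    also have "\<dots> = (\<integral>\<^sup>+\<omega>. ennreal ((1 + \<bar>X \<omega>\<bar>) ^ N) * (Kg * ennreal (w - v)) \<partial>M)"
      by (intro nn_integral_cong) (simp add: outer mult.assoc)
    also have "\<dots> = (\<integral>\<^sup>+\<omega>. ennreal ((1 + \<bar>X \<omega>\<bar>) ^ N) \<partial>M) * (Kg * ennreal (w - v))"
      by (rule nn_integral_multc) measurable
    also have "\<dots> < \<infinity>" using finX Kg by (simp add: ennreal_mult_less_top)
    finally show "(\<integral>\<^sup>+z. ennreal (indicator (UNIV \<times> {v..w}) z *\<^sub>R H N (fst z) (snd z)) \<partial>(lborel \<Otimes>\<^sub>M lborel)) < \<infinity>" .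
  qed
qed

end


context mm begin

lemma adm_setint:
  assumes "adm f" "v \<le> w"
  shows "set_integrable (lborel \<Otimes>\<^sub>M lborel) (UNIV \<times> {v..w}) (\<lambda>(y, b). f y b)"
  using assms(1)
proof (induction rule: adm.induct)
  case (aterm js m c)
  define D where "D = sum_list (map (\<lambda>(j, k). j + k) js)"
  have eqf: "(\<lambda>(y, b). c * prodP js y b / p 0 0 y b ^ m) = (\<lambda>z. c * prodP js (fst z) (snd z) / p 0 0 (fst z) (snd z) ^ m)"
    by auto
  have "set_integrable (lborel \<Otimes>\<^sub>M lborel) (UNIV \<times> {v..w}) (\<lambda>z. \<bar>c\<bar> * (case z of (y, b) \<Rightarrow> H (D * Suc m) y b))"
    using H_setint[OF assms(2)] by (intro set_integrable_mult_right) auto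
  then show ?case unfolding eqf
  proof (rule set_integrable_bound)
    show "set_borel_measurable (lborel \<Otimes>\<^sub>M lborel) (UNIV \<times> {v..w}) (\<lambda>z. c * prodP js (fst z) (snd z) / p 0 0 (fst z) (snd z) ^ m)"
      unfolding set_borel_measurable_def by measurable
    show "AE z in lborel \<Otimes>\<^sub>M lborel. z \<in> UNIV \<times> {v..w} \<longrightarrow>
        norm (c * prodP js (fst z) (snd z) / p 0 0 (fst z) (snd z) ^ m) \<le> norm (\<bar>c\<bar> * (case z of (y, b) \<Rightarrow> H (D * Suc m) y b))"
    proof (rule AE_I2)
      fix z :: "real \<times> real"
      obtain y b where z: "z = (y, b)" by (cases z)
      show "z \<in> UNIV \<times> {v..w} \<longrightarrow>
        norm (c * prodP js (fst z) (snd z) / p 0 0 (fst z) (snd z) ^ m) \<le> norm (\<bar>c\<bar> * (case z of (y, b) \<Rightarrow> H (D * Suc m) y b))"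
        using term_bound[OF aterm D_def, of c y b] H_nonneg[of "D * Suc m" y b] unfolding z by (simp add: abs_mult)
    qed
  qed
next
  case (aadd f g)
  then have "set_integrable (lborel \<Otimes>\<^sub>M lborel) (UNIV \<times> {v..w}) (\<lambda>z. (case z of (y, b) \<Rightarrow> f y b) + (case z of (y, b) \<Rightarrow> g y b))"
    by (intro set_integral_add(1))
  then show ?case by (simp add: case_prod_beta')
qed

end

theorem lemma2:
  fixes M :: "'s measure" and X :: "'s \<Rightarrow> real" and i :: nat and v w :: real
  assumes "prob_space M"
    and "X \<in> borel_measurable M"
    and "\<And>k::nat. k \<ge> 1 \<Longrightarrow> integrable M (\<lambda>\<omega>. \<bar>X \<omega>\<bar> ^ k)"
    and "v < w"
  shows "set_integrable (lborel \<Otimes>\<^sub>M lborel) (UNIV \<times> {v..w}) (\<lambda>(y, a). gfun M X i y a)"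
proof -
  interpret mm M X using assms(1-3) by (simp add: mm_def mm_axioms_def)
  obtain f where f: "adm f" "\<And>y. (deriv ^^ i) (\<lambda>b. (hfun M X 1 y b)\<^sup>2 / hfun M X 0 y b) = f y"
    using gfun_adm by blast
  have "(\<lambda>(y, a). gfun M X i y a) = (\<lambda>(y, a). f y a)" unfolding gfun_def using f(2) by auto
  then show ?thesis using adm_setint[OF f(1), of v w] assms(4) by simp
qed


end
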